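(* Let $q\ge 2$, $n\ge 1$, $h\in F(n,q)$ and $k=\kappa^{\min}(h)$. Then $\Omega(h)+k\le \mathcal{L}^*(h)$.
   Context: Let $q\ge 2$, $A=\{0,1,\dots,q-1\}$, $[n]=\{1,\dots,n\}$, and let $F(n,q)$ be the set of all maps $A^n\to A^n$. For $f\in F(m,q)$ and $i\in[m]$, $f_i$ is the $i$-th coordinate function and $f^i(x)=(x_1,\dots,x_{i-1},f_i(x),x_{i+1},\dots,x_m)$; for a word $w=(w_1,\dots,w_t)$ over $[m]$, $f^w=f^{w_t}\circ\cdots\circ f^{w_1}$. $\Pi([m])$ is the set of permutations of $[m]$ written as words $(w_1,\dots,w_m)$. $\mathrm{pr}_{[n]}:A^m\to A^n$ is the projection onto the first $n$ coordinates. For $m\ge n$, $(f,w)$ with $f\in F(m,q)$, $w\in\Pi([m])$ sequentializes $h\in F(n,q)$ if $\mathrm{pr}_{[n]}\circ f^w=h\circ\mathrm{pr}_{[n]}$. $\kappa^{\min}(h)$ is the smallest $k\ge 0$ such that there exist $f\in F(n+k,q)$ and $w\in\Pi([n+k])$ with $(f,w)$ sequentializing $h$. A coordinate function $h_i$ is trivial if $h_i(x)=x_i$ for all $x$; $\Omega(h)$ is the number of $i\in[n]$ such that $h_i$ is not trivial. $F^*(m,q)$ is the set of $g\in F(m,q)$ that update at most one coordinate, i.e. there is $i\in[m]$ with $g_j(x)=x_j$ for all $j\ne i$ and all $x\in A^m$. For $m\ge n$, $\mathcal{L}(h\,|\,m)$ is the smallest $t\ge 0$ such that there exist $g^{(1)},\dots,g^{(t)}\in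 F^*(m,q)$ with $\mathrm{pr}_{[n]}\circ g^{(t)}\circ\cdots\circ g^{(1)}=h\circ\mathrm{pr}_{[n]}$, and $\mathcal{L}^*(h)=\min\{\mathcal{L}(h\,|\,m): m\ge n\}$. *)

theory Defs
  imports Main
begin

text \<open>Points of A^m, A = {0..<q}, are lists of length m with entries < q.
  Coordinates are 0-based: coordinate i of the paper is list index i-1.\<close>

definition space :: "nat \<Rightarrow> nat \<Rightarrow> nat list set" where
  "space q m = {xs. length xs = m \<and> set xs \<subseteq> {0..<q}}"

text \<open>f \<in> F(m,q): a map A^m \<rightarrow> A^m (only its values on A^m matter).\<close>
definition inF :: "nat \<Rightarrow> nat \<Rightarrow> (nat list \<Rightarrow> nat list) \<Rightarrow> bool" where
  "inF m q f \<longleftrightarrow> (\<forall>x\<in>space q m. f x \<in> space q m)"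

definition upd :: "(nat list \<Rightarrow> nat list) \<Rightarrow> nat \<Rightarrow> nat list \<Rightarrow> nat list" where
  "upd f i x = x[i := f x ! i]"

definition seq_upd :: "(nat list \<Rightarrow> nat list) \<Rightarrow> nat list \<Rightarrow> nat list \<Rightarrow> nat list" where
  "seq_upd f w x = fold (\<lambda>i y. upd f i y) w x"

definition perm_word :: "nat \<Rightarrow> nat list \<Rightarrow> bool" where
  "perm_word m w \<longleftrightarrow> distinct w \<and> set w = {0..<m}"

text \<open>(f,w) sequentializes h (pr_{[n]} = take n).\<close>
definition sequentializes :: "nat \<Rightarrow> nat \<Rightarrow> (nat list \<Rightarrow> nat list) \<Rightarrow> nat
    \<Rightarrow> (nat list \<Rightarrow> nat list) \<Rightarrow> nat list \<Rightarrow> bool" where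
  "sequentializes q n h m f w \<longleftrightarrow> n \<le> m \<and>
     (\<forall>x\<in>space q m. take n (seq_upd f w x) = h (take n x))"

definition kappa_min :: "nat \<Rightarrow> nat \<Rightarrow> (nat list \<Rightarrow> nat list) \<Rightarrow> nat" where
  "kappa_min q n h = (LEAST k. \<exists>f w. inF (n + k) q f \<and> perm_word (n + k) w \<and>
        sequentializes q n h (n + k) f w)"

definition trivial_coord :: "nat \<Rightarrow> nat \<Rightarrow> (nat list \<Rightarrow> nat list) \<Rightarrow> nat \<Rightarrow> bool" where
  "trivial_coord q n h i \<longleftrightarrow> (\<forall>x\<in>space q n. h x ! i = x ! i)"

definition Omega :: "nat \<Rightarrow> nat \<Rightarrow> (nat list \<Rightarrow> nat list) \<Rightarrow> nat" where
  "Omega q n h = card {i. i < n \<and> \<not> trivial_coord q n h i}"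

definition inFstar :: "nat \<Rightarrow> nat \<Rightarrow> (nat list \<Rightarrow> nat list) \<Rightarrow> bool" where
  "inFstar m q g \<longleftrightarrow> inF m q g \<and>
     (\<exists>i<m. \<forall>j<m. j \<noteq> i \<longrightarrow> (\<forall>x\<in>space q m. g x ! j = x ! j))"

definition realizes :: "nat \<Rightarrow> nat \<Rightarrow> (nat list \<Rightarrow> nat list) \<Rightarrow> nat \<Rightarrow> nat \<Rightarrow> bool" where
  "realizes q n h m t \<longleftrightarrow> (\<exists>gs. length gs = t \<and> (\<forall>g\<in>set gs. inFstar m q g) \<and>
     (\<forall>x\<in>space q m. take n (fold (\<lambda>g y. g y) gs x) = h (take n x)))"

definition L :: "nat \<Rightarrow> nat \<Rightarrow> (nat list \<Rightarrow> nat list) \<Rightarrow> nat \<Rightarrow> nat" where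
  "L q n h m = (LEAST t. realizes q n h m t)"

text \<open>L*(h) = min over m \<ge> n of L(h|m), ranging only over m for which L(h|m) is defined.\<close>
definition Lstar :: "nat \<Rightarrow> nat \<Rightarrow> (nat list \<Rightarrow> nat list) \<Rightarrow> nat" where
  "Lstar q n h = (LEAST t. \<exists>m\<ge>n. realizes q n h m t)"

end

theory Submission imports Defs begin

locale realiz =
  fixes q n m :: nat and h :: "nat list \<Rightarrow> nat list" and gs :: "(nat list \<Rightarrow> nat list) list"
  assumes q: "q \<ge> 1" and nm: "n \<le> m" and gsF: "\<forall>g\<in>set gs. inFstar m q g"
  and real: "\<forall>x\<in>space q m. take n (fold (\<lambda>g y. g y) gs x) = h (take n x)"
begin

definition t where "t = length gs"

definition c :: "nat \<Rightarrow> nat" where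
  "c s = (SOME i. i<m \<and> (\<forall>j<m. j\<noteq>i \<longrightarrow> (\<forall>x\<in>space q m. (gs!s) x ! j = x ! j)))"

lemma c: assumes "s < t" shows "c s < m" "j < m \<Longrightarrow> j \<noteq> c s \<Longrightarrow> x\<in>space q m \<Longrightarrow> (gs!s) x ! j = x!j"
proof -
  have "inFstar m q (gs!s)" using gsF assms unfolding t_def by auto
  then have "\<exists>i. i<m \<and> (\<forall>j<m. j\<noteq>i \<longrightarrow> (\<forall>x\<in>space q m. (gs!s) x ! j = x ! j))"
    unfolding inFstar_def by blast
  from someI_ex[OF this] show "c s < m" "j < m \<Longrightarrow> j \<noteq> c s \<Longrightarrow> x\<in>space q m \<Longrightarrow> (gs!s) x ! j = x!j"
    unfolding c_def by blast+
qed

lemma gsF': "s<t \<Longrightarrow> x \<in> space q m \<Longrightarrow> (gs!s) x \<in> space q m"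
  using gsF unfolding t_def inFstar_def inF_def by auto

definition st where "st x s = fold (\<lambda>g y. g y) (take s gs) x"

lemma st0[simp]: "st x 0 = x" by (simp add: st_def)

lemma st_Suc: "s < t \<Longrightarrow> st x (Suc s) = (gs!s) (st x s)"
  unfolding st_def t_def by (simp add: take_Suc_conv_app_nth)

lemma st_space: "x \<in> space q m \<Longrightarrow> s \<le> t \<Longrightarrow> st x s \<in> space q m"
  by (induction s) (auto simp: st_Suc gsF')

lemma st_t: "st x t = fold (\<lambda>g y. g y) gs x" by (simp add: st_def t_def)

lemma st_Suc_other: "s < t \<Longrightarrow> x \<in> space q m \<Longrightarrow> j < m \<Longrightarrow> j \<noteq> c s \<Longrightarrow> st x (Suc s) ! j = st x s ! j"
  by (simp add: st_Suc c st_space)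

lemma st_notupd: "x \<in> space q m \<Longrightarrow> i < m \<Longrightarrow> s \<le> t \<Longrightarrow> (\<forall>s'<s. c s' \<noteq> i) \<Longrightarrow> st x s ! i = x ! i"
  by (induction s) (auto simp: st_Suc_other)

definition isl where "isl s \<longleftrightarrow> c s < n \<and> (\<forall>s'. s < s' \<and> s' < t \<longrightarrow> c s' \<noteq> c s)"
definition Ls where "Ls = {s. s<t \<and> isl s}"
definition U where "U = c ` Ls"
definition k where "k = t - card Ls"
definition cnt where "cnt s = card {s'. s'<s \<and> \<not> isl s'}"
definition pos where "pos s = (if isl s then c s else n + cnt s)"
definition N where "N = n + k"

lemma Max_last: assumes "i < n" "s0 < t" "c s0 = i"
  shows "Max {s'. s'<t \<and> c s' = i} < t" "c (Max {s'. s'<t \<and> c s' = i}) = i"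
    "isl (Max {s'. s'<t \<and> c s' = i})"
proof -
  let ?S = "{s'. s'<t \<and> c s' = i}"
  have fin: "finite ?S" by auto
  have ne: "?S \<noteq> {}" using assms by auto
  have M: "Max ?S \<in> ?S" using Max_in[OF fin ne] .
  then show "Max ?S < t" "c (Max ?S) = i" by auto
  have H: "\<forall>s'. Max ?S < s' \<and> s' < t \<longrightarrow> c s' \<noteq> i"
  proof (intro allI impI notI)
    fix s' assume a: "Max ?S < s' \<and> s' < t" "c s' = i"
    then have "s' \<in> ?S" by simp
    then have "s' \<le> Max ?S" by (rule Max_ge[OF fin])
    then show False using a(1) by linarith
  qed
  have cM: "c (Max ?S) = i" using M by simp
  show "isl (Max ?S)" unfolding isl_def cM using H assms(1) by blast
qed

lemma U_eq: "U = {i. i<n \<and> (\<exists>s<t. c s = i)}"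
proof
  show "U \<subseteq> {i. i<n \<and> (\<exists>s<t. c s = i)}" unfolding U_def Ls_def isl_def by auto
  show "{i. i<n \<and> (\<exists>s<t. c s = i)} \<subseteq> U"
  proof
    fix i assume "i \<in> {i. i<n \<and> (\<exists>s<t. c s = i)}"
    then obtain s0 where "i<n" "s0<t" "c s0 = i" by auto
    note MLst = Max_last[OF this]
    let ?M = "Max {s'. s'<t \<and> c s' = i}"
    have "?M \<in> Ls" unfolding Ls_def using MLst(1,3) by simp
    moreover have "i = c ?M" using MLst(2) by simp
    ultimately show "i \<in> U" unfolding U_def by (rule rev_image_eqI)
  qed
qed

lemma inj_c: "inj_on c Ls"
proof (rule inj_onI)
  fix a b assume ab: "a \<in> Ls" "b \<in> Ls" "c a = c b"
  then have A: "a < t" "\<forall>s'. a < s' \<and> s' < t \<longrightarrow> c s' \<noteq> c a"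
    and B: "b < t" "\<forall>s'. b < s' \<and> s' < t \<longrightarrow> c s' \<noteq> c b"
    unfolding Ls_def isl_def by auto
  show "a = b"
  proof (rule ccontr)
    assume "a \<noteq> b"
    then have "a < b \<or> b < a" by linarith
    then show False
    proof
      assume "a < b" then show False using A(2)[rule_format, of b] B(1) ab(3) by simp
    next
      assume "b < a" then show False using B(2)[rule_format, of a] A(1) ab(3) by simp
    qed
  qed
qed

lemma card_U: "card U = card Ls" unfolding U_def using card_image[OF inj_c] .

lemma card_Ls: "card Ls \<le> t"
proof -
  have "Ls \<subseteq> {..<t}" unfolding Ls_def by auto
  from card_mono[OF _ this] show ?thesis by simp
qed

lemma U_sub: "U \<subseteq> {0..<n}" unfolding U_def Ls_def isl_def by auto

lemma card_U_n: "card U \<le> n" using card_mono[OF _ U_sub] by simp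

lemma card_nonl: "card {s'. s'<t \<and> \<not> isl s'} = k"
proof -
  have "{s'. s'<t \<and> \<not> isl s'} = {..<t} - Ls" unfolding Ls_def by auto
  then show ?thesis unfolding k_def
    by (simp add: card_Diff_subset Ls_def subset_eq)
qed

lemma cnt_less: assumes "s < s'" "\<not> isl s" shows "cnt s < cnt s'"
proof -
  have "{s''. s''<s \<and> \<not> isl s''} \<subset> {s''. s''<s' \<and> \<not> isl s''}" using assms by auto
  then show ?thesis unfolding cnt_def by (intro psubset_card_mono) auto
qed

lemma cnt_k: assumes "s < t" "\<not> isl s" shows "cnt s < k"
proof -
  have "{s''. s''<s \<and> \<not> isl s''} \<subset> {s''. s''<t \<and> \<not> isl s''}" using assms by auto
  then have "cnt s < card {s''. s''<t \<and> \<not> isl s''}" unfolding cnt_def by (intro psubset_card_mono) auto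
  then show ?thesis using card_nonl by simp
qed

lemma pos_N: "s < t \<Longrightarrow> pos s < N"
  unfolding pos_def N_def using cnt_k by (auto simp: isl_def)

lemma pos_inj: assumes "s < t" "s' < t" "pos s = pos s'" shows "s = s'"
proof (rule ccontr)
  assume ne: "s \<noteq> s'"
  show False
  proof (cases "isl s")
    case True
    note T = this
    show False
    proof (cases "isl s'")
      case True
      then have "c s = c s'" using T assms unfolding pos_def by simp
      moreover have "s \<in> Ls" "s' \<in> Ls" using T True assms unfolding Ls_def by auto
      ultimately show False using inj_c ne unfolding inj_on_def by blast
    next
      case False
      have "pos s < n" using T unfolding pos_def isl_def by simp
      moreover have "pos s' \<ge> n" using False unfolding pos_def by simp
      ultimately show False using assms(3) by simp
    qed
  next
    case F: False
    show False
    proof (cases "isl s'")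
      case True
      have "pos s' < n" using True unfolding pos_def isl_def by simp
      moreover have "pos s \<ge> n" using F unfolding pos_def by simp
      ultimately show False using assms(3) by simp
    next
      case False
      then have "cnt s = cnt s'" using F assms unfolding pos_def by simp
      then show False using cnt_less F False ne by (metis less_irrefl linorder_neqE_nat)
    qed
  qed
qed

lemma pos_notin: "s < t \<Longrightarrow> i < n \<Longrightarrow> i \<notin> U \<Longrightarrow> pos s \<noteq> i"
  unfolding pos_def U_def Ls_def by auto

definition lastS where "lastS s i = Max {s'. s'<s \<and> c s' = i}"

lemma lastS_lt: "\<exists>s'<s. c s' = i \<Longrightarrow> lastS s i < s \<and> c (lastS s i) = i"
proof -
  assume "\<exists>s'<s. c s' = i"
  then have "{s'. s'<s \<and> c s' = i} \<noteq> {}" by auto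
  from Max_in[OF _ this] show ?thesis unfolding lastS_def by auto
qed

lemma lastS_Suc_eq: "lastS (Suc s) (c s) = s"
  unfolding lastS_def by (rule Max_eqI) auto

lemma lastS_Suc_ne: "i \<noteq> c s \<Longrightarrow> lastS (Suc s) i = lastS s i"
proof -
  assume "i \<noteq> c s"
  then have "{s'. s'<Suc s \<and> c s' = i} = {s'. s'<s \<and> c s' = i}" using less_Suc_eq by auto
  then show ?thesis unfolding lastS_def by simp
qed

definition R where "R y s = map (\<lambda>i. if (\<exists>s'<s. c s' = i) then y ! pos (lastS s i) else if i<n then y!i else 0) [0..<m]"

definition F where "F j y = (if \<exists>s<t. pos s = j then (gs!(THE s. s<t \<and> pos s = j)) (R y (THE s. s<t \<and> pos s = j)) ! c (THE s. s<t \<and> pos s = j) else y ! j)"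

definition fN where "fN y = map (\<lambda>j. F j y) [0..<N]"

definition w where "w = map pos [0..<t] @ filter (\<lambda>i. i \<notin> U) [0..<n]"

lemma the_pos: "s<t \<Longrightarrow> (THE s'. s'<t \<and> pos s' = pos s) = s"
  by (rule the_equality) (auto dest: pos_inj)

lemma F_pos: "s<t \<Longrightarrow> F (pos s) y = (gs!s) (R y s) ! c s"
  unfolding F_def using the_pos by auto

lemma F_other: "\<forall>s<t. pos s \<noteq> j \<Longrightarrow> F j y = y ! j"
  unfolding F_def by auto

lemma kN: "n \<le> N" unfolding N_def by simp

lemma R_space: assumes y: "y \<in> space q N" and s: "s \<le> t" shows "R y s \<in> space q m"
proof -
  have ly: "length y = N" and sy: "set y \<subseteq> {0..<q}" using y by (auto simp: space_def)
  have yq: "y ! p < q" if "p < N" for p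
  proof -
    have "y ! p \<in> set y" using that ly by simp
    then show ?thesis using sy by auto
  qed
  have H: "\<forall>i<m. R y s ! i < q"
  proof (intro allI impI)
    fix i assume i: "i < m"
    show "R y s ! i < q"
    proof (cases "\<exists>s'<s. c s' = i")
      case True
      have "lastS s i < s" using lastS_lt[OF True] by simp
      then have "lastS s i < t" using s by simp
      then have "pos (lastS s i) < N" by (rule pos_N)
      moreover have "R y s ! i = y ! pos (lastS s i)" using True i by (simp add: R_def)
      ultimately show ?thesis using yq by simp
    next
      case False
      show ?thesis
      proof (cases "i < n")
        case True
        then have "R y s ! i = y ! i" using False i by (auto simp: R_def)
        then show ?thesis using yq True kN by simp
      next
        case F2: False
        then have "R y s ! i = 0" using False i by (auto simp: R_def)
        then show ?thesis using q by simp
      qed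
    qed
  qed
  have lR: "length (R y s) = m" by (simp add: R_def)
  show ?thesis unfolding space_def using lR H by (auto simp: in_set_conv_nth)
qed

lemma F_lt: assumes y: "y \<in> space q N" and j: "j < N" shows "F j y < q"
proof (cases "\<exists>s<t. pos s = j")
  case True
  then obtain s where s: "s<t" "pos s = j" by auto
  have "(gs!s) (R y s) \<in> space q m" using gsF' R_space[OF y] s by auto
  then show ?thesis using s F_pos c(1)[OF s(1)] by (auto simp: space_def subset_eq)
next
  case False
  then show ?thesis using F_other y j by (auto simp: space_def subset_eq)
qed

lemma fN_inF: "inF N q fN"
  unfolding inF_def space_def fN_def using F_lt by (auto simp: space_def)

lemma upd_fN: "j < N \<Longrightarrow> upd fN j y = y[j := F j y]"
  unfolding upd_def fN_def by simp

definition ys where "ys y s = fold (\<lambda>i z. upd fN i z) (map pos [0..<s]) y"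

lemma ys_Suc: "ys y (Suc s) = upd fN (pos s) (ys y s)"
  unfolding ys_def by simp

lemma ys_Suc': "s < t \<Longrightarrow> ys y (Suc s) = (ys y s)[pos s := F (pos s) (ys y s)]"
  using ys_Suc upd_fN pos_N by simp

lemma ys_space: "y \<in> space q N \<Longrightarrow> s \<le> t \<Longrightarrow> ys y s \<in> space q N"
proof (induction s)
  case 0 then show ?case by (simp add: ys_def)
next
  case (Suc s)
  then have Z: "ys y s \<in> space q N" by simp
  have "F (pos s) (ys y s) < q" using F_lt[OF Z pos_N] Suc by simp
  then show ?case using Z ys_Suc'[of s y] Suc.prems
    by (auto simp: space_def dest!: subsetD[OF set_update_subset_insert])
qed

definition x0 where "x0 y = take n y @ replicate (m-n) 0"

lemma x0_space: "y \<in> space q N \<Longrightarrow> x0 y \<in> space q m"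
  using kN nm q unfolding x0_def space_def by (auto dest: in_set_takeD)

lemma inv: assumes y: "y \<in> space q N" shows "s \<le> t \<Longrightarrow> R (ys y s) s = st (x0 y) s"
proof (induction s)
  case 0
  have ly: "length y = N" using y by (simp add: space_def)
  show ?case
  proof (rule nth_equalityI)
    show "length (R (ys y 0) 0) = length (st (x0 y) 0)" using nm kN ly by (simp add: R_def x0_def ys_def)
    fix i assume "i < length (R (ys y 0) 0)"
    then have i: "i < m" by (simp add: R_def)
    show "R (ys y 0) 0 ! i = st (x0 y) 0 ! i"
      using i ly kN nm by (auto simp: R_def ys_def x0_def nth_append)
  qed
next
  case (Suc s)
  then have s: "s < t" by simp
  have IH: "R (ys y s) s = st (x0 y) s" using Suc by simp
  let ?Z = "ys y s"
  have Zs: "?Z \<in> space q N" using ys_space[OF y] s by simp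
  then have lZ: "length ?Z = N" by (simp add: space_def)
  have xs: "x0 y \<in> space q m" using x0_space[OF y] .
  have stm: "length (st (x0 y) s) = m" "length (st (x0 y) (Suc s)) = m"
    using st_space[OF xs] s by (auto simp: space_def)
  show ?case
  proof (rule nth_equalityI)
    show "length (R (ys y (Suc s)) (Suc s)) = length (st (x0 y) (Suc s))" using stm by (simp add: R_def)
    fix i assume "i < length (R (ys y (Suc s)) (Suc s))"
    then have i: "i < m" by (simp add: R_def)
    have Z': "ys y (Suc s) = ?Z[pos s := F (pos s) ?Z]" using ys_Suc' s by simp
    have psN: "pos s < N" using pos_N s .
    show "R (ys y (Suc s)) (Suc s) ! i = st (x0 y) (Suc s) ! i"
    proof (cases "i = c s")
      case True
      have "R (ys y (Suc s)) (Suc s) ! i = ys y (Suc s) ! pos s"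
        using i True lastS_Suc_eq by (auto simp: R_def)
      also have "\<dots> = F (pos s) ?Z" using Z' psN lZ by simp
      also have "\<dots> = (gs!s) (st (x0 y) s) ! c s" using F_pos s IH by simp
      also have "\<dots> = st (x0 y) (Suc s) ! i" using st_Suc s True by simp
      finally show ?thesis .
    next
      case False
      have st_eq: "st (x0 y) (Suc s) ! i = st (x0 y) s ! i" using st_Suc_other[OF s xs i False] .
      have ex: "(\<exists>s'<Suc s. c s' = i) = (\<exists>s'<s. c s' = i)" using False less_Suc_eq by auto
      show ?thesis
      proof (cases "\<exists>s'<s. c s' = i")
        case True
        have lt: "lastS s i < s" using lastS_lt True by blast
        then have "pos (lastS s i) \<noteq> pos s" using pos_inj s by (metis less_irrefl order.strict_trans)
        then have "R (ys y (Suc s)) (Suc s) ! i = ?Z ! pos (lastS s i)"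
          using i True ex lastS_Suc_ne[OF False] Z' by (auto simp: R_def)
        also have "\<dots> = R ?Z s ! i" using i True by (simp add: R_def)
        finally show ?thesis using IH st_eq by simp
      next
        case F: False
        have "pos s \<noteq> i \<or> \<not> i < n"
          using False unfolding pos_def by auto
        then have "R (ys y (Suc s)) (Suc s) ! i = R ?Z s ! i"
          using i F ex Z' by (auto simp: R_def)
        then show ?thesis using IH st_eq by simp
      qed
    qed
  qed
qed

lemma fold_id: "\<forall>i\<in>set is. i < N \<and> (\<forall>s<t. pos s \<noteq> i) \<Longrightarrow> fold (\<lambda>i z. upd fN i z) is z = z"
  by (induction "is" arbitrary: z) (auto simp: upd_fN F_other)

lemma w_split: "seq_upd fN w y = fold (\<lambda>i z. upd fN i z) (filter (\<lambda>i. i \<notin> U) [0..<n]) (ys y t)"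
  unfolding seq_upd_def w_def ys_def by simp

lemma seq_ok: assumes y: "y \<in> space q N" shows "take n (seq_upd fN w y) = h (take n y)"
proof -
  have "seq_upd fN w y = ys y t" unfolding w_split
    by (rule fold_id) (use kN pos_notin in auto)
  moreover have "take n (ys y t) = take n (st (x0 y) t)"
  proof (rule nth_equalityI)
    have "ys y t \<in> space q N" using ys_space[OF y] by simp
    moreover have "st (x0 y) t \<in> space q m" using st_space[OF x0_space[OF y]] by simp
    ultimately show "length (take n (ys y t)) = length (take n (st (x0 y) t))"
      using kN nm by (simp add: space_def)
    fix i assume "i < length (take n (ys y t))"
    then have i: "i < n" by simp
    have "ys y t ! i = R (ys y t) t ! i"
    proof (cases "\<exists>s'<t. c s' = i")
      case True
      then obtain s0 where "s0 < t" "c s0 = i" by auto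
      from Max_last[OF i this] have "pos (lastS t i) = i" unfolding lastS_def pos_def by simp
      then show ?thesis using True i nm by (simp add: R_def)
    next
      case False then show ?thesis using i nm by (auto simp: R_def)
    qed
    then show "take n (ys y t) ! i = take n (st (x0 y) t) ! i" using inv[OF y] i by simp
  qed
  moreover have "take n (st (x0 y) t) = h (take n (x0 y))"
    using real x0_space[OF y] st_t by simp
  moreover have "take n (x0 y) = take n y" using y kN unfolding x0_def space_def by simp
  ultimately show ?thesis by simp
qed

lemma perm_w: "perm_word N w"
proof -
  have d1: "distinct (map pos [0..<t])"
    by (simp add: distinct_map inj_on_def pos_inj)
  have d: "distinct w" unfolding w_def using d1 pos_notin by fastforce
  have sub: "set w \<subseteq> {0..<N}" unfolding w_def using pos_N kN by auto
  have sf: "set (filter (\<lambda>i. i \<notin> U) [0..<n]) = {0..<n} - U" by auto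
  have "length (filter (\<lambda>i. i \<notin> U) [0..<n]) = card ({0..<n} - U)"
    using distinct_card[of "filter (\<lambda>i. i \<notin> U) [0..<n]"] sf by simp
  also have "\<dots> = n - card U" using card_Diff_subset[OF _ U_sub] finite_subset[OF U_sub] by simp
  finally have "length w = t + (n - card U)" unfolding w_def by simp
  also have "\<dots> = N" unfolding N_def k_def using card_U card_U_n card_Ls by simp
  finally have "card (set w) = N" using distinct_card[OF d] by simp
  then have "set w = {0..<N}" using card_subset_eq[OF _ sub] by simp
  then show ?thesis using d unfolding perm_word_def by simp
qed

lemma kappa_le: "kappa_min q n h \<le> k"
proof -
  have "inF (n + k) q fN \<and> perm_word (n + k) w \<and> sequentializes q n h (n + k) fN w"
    using fN_inF perm_w seq_ok kN unfolding N_def sequentializes_def by simp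
  then show ?thesis unfolding kappa_min_def by (intro Least_le) blast
qed

lemma Omega_le: "Omega q n h \<le> card U"
proof -
  have "{i. i < n \<and> \<not> trivial_coord q n h i} \<subseteq> U"
  proof
    fix i assume "i \<in> {i. i < n \<and> \<not> trivial_coord q n h i}"
    then have i: "i < n" and nt: "\<not> trivial_coord q n h i" by auto
    show "i \<in> U"
    proof (rule ccontr)
      assume "i \<notin> U"
      then have nc: "\<forall>s<t. c s \<noteq> i" using U_eq i by auto
      have "trivial_coord q n h i" unfolding trivial_coord_def
      proof
        fix z assume z: "z \<in> space q n"
        let ?x = "z @ replicate (m-n) 0"
        have xs: "?x \<in> space q m" using z nm q by (auto simp: space_def)
        have tz: "take n ?x = z" using z by (simp add: space_def)
        have "h z ! i = take n (st ?x t) ! i" using real xs tz st_t by simp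
        also have "\<dots> = st ?x t ! i" using i by simp
        also have "\<dots> = ?x ! i" using st_notupd[OF xs _ _ ] nc i nm by simp
        also have "\<dots> = z ! i" using z i by (simp add: space_def nth_append)
        finally show "h z ! i = z ! i" .
      qed
      then show False using nt by simp
    qed
  qed
  then show ?thesis unfolding Omega_def using card_mono[OF _ ] finite_subset[OF U_sub] by (meson card_mono finite_atLeastLessThan rev_finite_subset U_sub)
qed

lemma main: "Omega q n h + kappa_min q n h \<le> t"
  using Omega_le kappa_le card_U card_Ls unfolding k_def by linarith

end
definition cp :: "nat \<Rightarrow> nat \<Rightarrow> nat list \<Rightarrow> nat list" where "cp n i y = y[n+i := y!i]"
definition cm :: "(nat list \<Rightarrow> nat list) \<Rightarrow> nat \<Rightarrow> nat \<Rightarrow> nat list \<Rightarrow> nat list" where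
  "cm h n i y = y[i := h (drop n y) ! i]"

lemma cp_fold: assumes "length x = 2*n" shows "j \<le> n \<Longrightarrow>
  length (fold (\<lambda>g y. g y) (map (cp n) [0..<j]) x) = 2*n \<and>
  (\<forall>p<2*n. fold (\<lambda>g y. g y) (map (cp n) [0..<j]) x ! p = (if n \<le> p \<and> p < n+j then x!(p-n) else x!p))"
proof (induction j)
  case 0 then show ?case using assms by simp
next
  case (Suc j)
  then show ?case by (auto simp: cp_def nth_list_update)
qed

lemma cm_fold: assumes "length X = 2*n" "drop n X = v" shows "j \<le> n \<Longrightarrow>
  length (fold (\<lambda>g y. g y) (map (cm h n) [0..<j]) X) = 2*n \<and>
  (\<forall>p<2*n. fold (\<lambda>g y. g y) (map (cm h n) [0..<j]) X ! p = (if p < j then h v ! p else X!p))"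
proof (induction j)
  case 0 then show ?case using assms by simp
next
  case (Suc j)
  let ?Y = "fold (\<lambda>g y. g y) (map (cm h n) [0..<j]) X"
  have IH: "length ?Y = 2*n" "\<forall>p<2*n. ?Y ! p = (if p < j then h v ! p else X!p)" using Suc by auto
  have "drop n ?Y = v"
  proof (rule nth_equalityI)
    show "length (drop n ?Y) = length v" using IH assms by auto
    fix p assume "p < length (drop n ?Y)"
    then show "drop n ?Y ! p = v ! p" using IH assms Suc.prems by auto
  qed
  then have eq: "fold (\<lambda>g y. g y) (map (cm h n) [0..<Suc j]) X = ?Y[j := h v ! j]"
    by (simp add: cm_def)
  show ?case unfolding eq using IH Suc.prems by (auto simp: nth_list_update)
qed

lemma exists_real: assumes q: "q \<ge> 1" and h: "inF n q h" shows "\<exists>t m. m \<ge> n \<and> realizes q n h m t"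
proof -
  let ?gs = "map (cp n) [0..<n] @ map (cm h n) [0..<n]"
  have F1: "inFstar (2*n) q (cp n i)" if "i < n" for i
    unfolding inFstar_def inF_def
  proof (intro conjI)
    show "\<forall>x\<in>space q (2*n). cp n i x \<in> space q (2 * n)"
      using that by (auto simp: space_def cp_def dest!: subsetD[OF set_update_subset_insert])
    show "\<exists>i'<2*n. \<forall>j<2*n. j \<noteq> i' \<longrightarrow> (\<forall>x\<in>space q (2*n). cp n i x ! j = x ! j)"
      using that by (intro exI[of _ "n+i"]) (auto simp: cp_def)
  qed
  have F2: "inFstar (2*n) q (cm h n i)" if "i < n" for i
    unfolding inFstar_def inF_def
  proof (intro conjI)
    show "\<forall>x\<in>space q (2*n). cm h n i x \<in> space q (2 * n)"
    proof
      fix x assume x: "x \<in> space q (2*n)"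
      then have "drop n x \<in> space q n" by (auto simp: space_def dest: in_set_dropD)
      then have "h (drop n x) \<in> space q n" using h by (simp add: inF_def)
      then have "h (drop n x) ! i \<in> set (h (drop n x))" "set (h (drop n x)) \<subseteq> {0..<q}"
        using that by (auto simp: space_def)
      then have "h (drop n x) ! i < q" by auto
      then show "cm h n i x \<in> space q (2 * n)" using x
        by (auto simp: space_def cm_def dest!: subsetD[OF set_update_subset_insert])
    qed
    show "\<exists>i'<2*n. \<forall>j<2*n. j \<noteq> i' \<longrightarrow> (\<forall>x\<in>space q (2*n). cm h n i x ! j = x ! j)"
      using that by (intro exI[of _ "i"]) (auto simp: cm_def)
  qed
  have R: "take n (fold (\<lambda>g y. g y) ?gs x) = h (take n x)" if x: "x \<in> space q (2*n)" for x
  proof -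
    let ?X = "fold (\<lambda>g y. g y) (map (cp n) [0..<n]) x"
    have lx: "length x = 2*n" using x by (simp add: space_def)
    note A = cp_fold[OF lx, of n, simplified]
    have dX: "drop n ?X = take n x"
    proof (rule nth_equalityI)
      show "length (drop n ?X) = length (take n x)" using A lx by simp
      fix p assume "p < length (drop n ?X)"
      then show "drop n ?X ! p = take n x ! p" using A lx by auto
    qed
    note B = cm_fold[OF conjunct1[OF A] dX, of n h, simplified]
    have "take n x \<in> space q n" using x by (auto simp: space_def dest: in_set_takeD)
    then have lh: "length (h (take n x)) = n" using h by (simp add: inF_def space_def)
    show ?thesis
    proof (rule nth_equalityI)
      show "length (take n (fold (\<lambda>g y. g y) ?gs x)) = length (h (take n x))" using B lh by simp
      fix p assume "p < length (take n (fold (\<lambda>g y. g y) ?gs x))"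
      then show "take n (fold (\<lambda>g y. g y) ?gs x) ! p = h (take n x) ! p" using B by auto
    qed
  qed
  have "realizes q n h (2*n) (2*n)"
    unfolding realizes_def
    by (intro exI[of _ ?gs]) (use F1 F2 R in auto)
  then show ?thesis by (intro exI[of _ "2*n"]) auto
qed

theorem mainTheorem9:
  fixes q n :: nat and h :: "nat list \<Rightarrow> nat list"
  assumes "q \<ge> 2" and "n \<ge> 1" and "inF n q h"
  shows "Omega q n h + kappa_min q n h \<le> Lstar q n h"
proof -
  have q1: "q \<ge> 1" using assms by simp
  obtain t0 m0 where "m0 \<ge> n" "realizes q n h m0 t0" using exists_real[OF q1 assms(3)] by blast
  then have "\<exists>t m. m \<ge> n \<and> realizes q n h m t" by blast
  then have "\<exists>m\<ge>n. realizes q n h m (Lstar q n h)"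
    unfolding Lstar_def by (rule LeastI_ex[where P = "\<lambda>t. \<exists>m\<ge>n. realizes q n h m t"])
  then obtain m gs where m: "m \<ge> n" and gs: "length gs = Lstar q n h" "\<forall>g\<in>set gs. inFstar m q g"
    "\<forall>x\<in>space q m. take n (fold (\<lambda>g y. g y) gs x) = h (take n x)"
    unfolding realizes_def by blast
  interpret realiz q n m h gs using q1 m gs by unfold_locales auto
  show ?thesis using main gs(1) unfolding t_def by simp
qed

end
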